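(* Let $r,m\ge0$ and $k\ge1$ be integers and $n\ge0$. Then $$\lim_{q\to1}\frac{\sum_{j=0}^{2n}(-1)^jq^{rj^2+mj}\begin{bmatrix} 2n\\ j\end{bmatrix}_{q^k}}{(q;q^2)_n}=(k-2r)^n.$$
   Context: $(x;q)_n=\prod_{j=0}^{n-1}(1-q^jx)$. The Gaussian binomial coefficient is $\begin{bmatrix} n\\ j\end{bmatrix}_q=\frac{(q;q)_n}{(q;q)_j(q;q)_{n-j}}$ for $0\le j\le n$, a polynomial in $q$; $\begin{bmatrix} n\\ j\end{bmatrix}_{q^k}$ is this with $q$ replaced by $q^k$. The quotient is a rational function of $q$ and the limit is taken as $q\to1$. *)

theory Defs
  imports "HOL-Analysis.Analysis"
begin

definition qpoch :: "real \<Rightarrow> real \<Rightarrow> nat \<Rightarrow> real" where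
  "qpoch x q n = (\<Prod>j<n. 1 - q ^ j * x)"

definition qbinom :: "nat \<Rightarrow> nat \<Rightarrow> real \<Rightarrow> real" where
  "qbinom n j q = qpoch q q n / (qpoch q q j * qpoch q q (n - j))"

end

theory Submission imports Defs "HOL-Computational_Algebra.Polynomial" begin

definition bnd :: "real poly \<Rightarrow> int \<Rightarrow> bool" where
  "bnd p d \<longleftrightarrow> (\<forall>e. int e > d \<longrightarrow> coeff p e = 0)"

lemma bnd_mono: "bnd p d \<Longrightarrow> d \<le> d' \<Longrightarrow> bnd p d'"
  unfolding bnd_def by auto

lemma bnd_neg: "bnd p d \<Longrightarrow> d < 0 \<Longrightarrow> p = 0"
  unfolding bnd_def by (auto simp: poly_eq_iff)

lemma bnd_mult:
  assumes "bnd p d1" "bnd q d2"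
  shows "bnd (p*q) (d1+d2)"
  unfolding bnd_def
proof (intro allI impI)
  fix e assume e: "int e > d1 + d2"
  have "coeff p i * coeff q (e-i) = 0" if "i \<le> e" for i
  proof (cases "int i > d1")
    case True then show ?thesis using assms(1) by (simp add: bnd_def)
  next
    case False then have "int (e-i) > d2" using e that by simp
    then show ?thesis using assms(2) by (simp add: bnd_def)
  qed
  then show "coeff (p*q) e = 0" unfolding coeff_mult by (intro sum.neutral) auto
qed

lemma bnd_mult_coeff:
  assumes "bnd p d1" "bnd q d2" "int e1 = d1" "int e2 = d2"
  shows "coeff (p*q) (e1+e2) = coeff p e1 * coeff q e2"
proof -
  have "coeff p i * coeff q (e1+e2-i) = (if i = e1 then coeff p e1 * coeff q e2 else 0)"
    if "i \<le> e1+e2" for i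
  proof (cases "i = e1")
    case True then show ?thesis by simp
  next
    case False
    show ?thesis
    proof (cases "i > e1")
      case True then show ?thesis using assms(1,3) False by (simp add: bnd_def)
    next
      case False2: False
      then have "int (e1+e2-i) > d2" using assms(4) False by simp
      then show ?thesis using assms(2) False by (simp add: bnd_def)
    qed
  qed
  then have "coeff (p*q) (e1+e2) = (\<Sum>i\<le>e1+e2. (if i = e1 then coeff p e1 * coeff q e2 else 0))"
    unfolding coeff_mult by (intro sum.cong) auto
  also have "\<dots> = coeff p e1 * coeff q e2" by simp
  finally show ?thesis .
qed

lemma shift_lemma:
  "\<forall>d. bnd p d \<longrightarrow> bnd (pcompose p [:\<alpha>,1:]) d \<and>
     (\<forall>e. int e = d \<longrightarrow> coeff (pcompose p [:\<alpha>,1:]) e = coeff p e) \<and>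
     (\<forall>e. int e = d - 1 \<longrightarrow> coeff (pcompose p [:\<alpha>,1:]) e = coeff p e + of_int d * \<alpha> * coeff p (Suc e))"
proof (induction p)
  case 0
  then show ?case by (simp add: bnd_def)
next
  case (pCons a p)
  show ?case
  proof (intro allI impI)
    fix d assume b: "bnd (pCons a p) d"
    have bp: "bnd p (d-1)" unfolding bnd_def
    proof (intro allI impI)
      fix e assume "d - 1 < int e"
      then have "d < int (Suc e)" by simp
      then have "coeff (pCons a p) (Suc e) = 0" using b by (simp only: bnd_def)
      then show "coeff p e = 0" by simp
    qed
    note IH = pCons.IH[rule_format, OF bp]
    have cf: "coeff (pcompose (pCons a p) [:\<alpha>,1:]) e =
       (if e = 0 then a else 0) + \<alpha> * coeff (pcompose p [:\<alpha>,1:]) e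
       + (if e = 0 then 0 else coeff (pcompose p [:\<alpha>,1:]) (e-1))" for e
      by (cases e) (simp_all add: pcompose_pCons)
    have A: "bnd (pcompose (pCons a p) [:\<alpha>,1:]) d"
      unfolding bnd_def
    proof (intro allI impI)
      fix e assume e: "d < int e"
      have "coeff (pcompose p [:\<alpha>,1:]) e = 0" using IH e by (simp add: bnd_def)
      moreover have "e = 0 \<Longrightarrow> a = 0" using b[unfolded bnd_def, rule_format, of 0] e by simp
      moreover have "e \<noteq> 0 \<Longrightarrow> coeff (pcompose p [:\<alpha>,1:]) (e-1) = 0" using IH e by (simp add: bnd_def)
      ultimately show "coeff (pcompose (pCons a p) [:\<alpha>,1:]) e = 0" unfolding cf by simp
    qed
    have B: "coeff (pcompose (pCons a p) [:\<alpha>,1:]) e = coeff (pCons a p) e" if e: "int e = d" for e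
    proof -
      have "coeff (pcompose p [:\<alpha>,1:]) e = 0" using IH e by (simp add: bnd_def)
      moreover have "e \<noteq> 0 \<Longrightarrow> coeff (pcompose p [:\<alpha>,1:]) (e-1) = coeff p (e-1)" using IH e by simp
      ultimately show ?thesis unfolding cf by (cases e) simp_all
    qed
    have C: "coeff (pcompose (pCons a p) [:\<alpha>,1:]) e = coeff (pCons a p) e + of_int d * \<alpha> * coeff (pCons a p) (Suc e)"
      if e: "int e = d - 1" for e
    proof -
      have 1: "coeff (pcompose p [:\<alpha>,1:]) e = coeff p e" using IH e by simp
      have 2: "e \<noteq> 0 \<Longrightarrow> coeff (pcompose p [:\<alpha>,1:]) (e-1) = coeff p (e-1) + of_int (d-1) * \<alpha> * coeff p e"
        using IH e by (cases e) auto
      show ?thesis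
      proof (cases e)
        case 0 then have "d = 1" using e by simp
        then show ?thesis unfolding cf using 1 0 by simp
      next
        case (Suc e') then show ?thesis unfolding cf using 1 2 by (simp add: algebra_simps)
      qed
    qed
    show "bnd (pcompose (pCons a p) [:\<alpha>,1:]) d \<and>
     (\<forall>e. int e = d \<longrightarrow> coeff (pcompose (pCons a p) [:\<alpha>,1:]) e = coeff (pCons a p) e) \<and>
     (\<forall>e. int e = d - 1 \<longrightarrow> coeff (pcompose (pCons a p) [:\<alpha>,1:]) e = coeff (pCons a p) e + of_int d * \<alpha> * coeff (pCons a p) (Suc e))"
      using A B C by blast
  qed
qed


definition Cp :: "nat \<Rightarrow> real poly" where
  "Cp a = smult ((-1)^a / fact a) (\<Prod>t<a. [:- of_nat t, 1:])"

lemma prod_lin_bnd: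
  "bnd (\<Prod>t<a. [:- of_nat t, 1:] :: real poly) (int a) \<and> coeff (\<Prod>t<a. [:- of_nat t, 1:] :: real poly) a = 1"
proof (induction a)
  case 0
  then show ?case by (simp add: bnd_def coeff_1)
next
  case (Suc a)
  have b1: "bnd [:- of_nat a, 1:] 1" by (simp add: bnd_def coeff_pCons split: nat.splits)
  have "bnd ((\<Prod>t<a. [:- of_nat t, 1:]) * [:- of_nat a, 1:]) (int a + 1)"
    using bnd_mult[OF conjunct1[OF Suc.IH] b1] .
  moreover have "coeff ((\<Prod>t<a. [:- of_nat t, 1:]) * [:- of_nat a, 1:] :: real poly) (a + 1) = 1"
  proof -
    have "coeff ((\<Prod>t<a. [:- of_nat t, 1:]) * [:- of_nat a, 1:]) (a + 1)
       = coeff (\<Prod>t<a. [:- of_nat t, 1:] :: real poly) a * coeff [:- of_nat a, 1:] 1"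
      by (rule bnd_mult_coeff[OF conjunct1[OF Suc.IH] b1]) simp_all
    also have "\<dots> = 1" using Suc.IH by simp
    finally show ?thesis .
  qed
  ultimately show ?case by (simp add: prod.lessThan_Suc add.commute del: mult_pCons_right)
qed

lemma Cp_bnd: "bnd (Cp a) (int a)"
  using prod_lin_bnd[of a] by (simp add: Cp_def bnd_def)

lemma Cp_coeff: "coeff (Cp a) a = (-1)^a / fact a"
  using prod_lin_bnd[of a] by (simp add: Cp_def)

lemma poly_Cp: "poly (Cp a) (real y) = (-1)^a * real (y choose a)"
proof -
  have "poly (\<Prod>t<a. [:- of_nat t, 1:]) (real y) = (\<Prod>t=0..<a. real y - of_nat t)"
    by (simp add: poly_prod atLeast0LessThan)
  then show ?thesis
    by (simp add: Cp_def binomial_gbinomial gbinomial_prod_rev)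
qed

lemma coeff_lin_pow: "coeff ([:1,-1:]^y :: real poly) a = (-1)^a * real (y choose a)"
proof (induction y arbitrary: a)
  case 0
  then show ?case by (simp add: coeff_1)
next
  case (Suc y)
  show ?case
  proof (cases a)
    case 0
    then show ?thesis using Suc.IH[of 0] by simp
  next
    case (Suc b)
    then show ?thesis using Suc.IH[of b] Suc.IH[of "Suc b"]
      by (simp add: algebra_simps)
  qed
qed

fun H :: "nat \<Rightarrow> nat \<Rightarrow> nat \<Rightarrow> nat \<Rightarrow> real poly" where
  "H r k 0 m = 1"
| "H r k (Suc N) m = H r k N (m+k) - [:1,-1:]^(r+m) * H r k N (m+2*r)"

definition LC :: "real \<Rightarrow> nat \<Rightarrow> nat \<Rightarrow> real" where
  "LC d N i = (if N \<le> 2*i \<and> i \<le> N then fact N * d^(N-i) / (fact (2*i-N) * 2^(N-i) * fact (N-i)) else 0)"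

lemma alg0: "(Y::real) \<noteq> 0 \<Longrightarrow> Z \<noteq> 0 \<Longrightarrow> w \<noteq> 0 \<Longrightarrow>
   (2*w*X)*(d*D)/((2*Z)*(w*Y)) = d*1*(X*D/(Z*Y)) + 0"
  by (simp add: field_simps)

lemma alg1: "(Y::real) \<noteq> 0 \<Longrightarrow> Z \<noteq> 0 \<Longrightarrow> w \<noteq> 0 \<Longrightarrow> B \<noteq> 0 \<Longrightarrow> P \<noteq> 0 \<Longrightarrow> Q \<noteq> 0 \<Longrightarrow>
   (w * 2 + P) * X * (d * D) / ((P * B) * (2 * Z) * (w * Y))
   = d * Q * (X * D / (Q * (P * B) * Z * Y)) + X * (d * D) / (B * (2 * Z) * (w * Y))"
  by (simp add: field_simps)

lemma LC_rec:
  assumes "Suc N \<le> 2*i"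
  shows "LC d (Suc N) i = d * (2*real i - real N) * LC d N i + LC d N (i-1)"
proof (cases "i \<le> N")
  case False
  show ?thesis
  proof (cases "i = Suc N")
    case True
    then show ?thesis by (simp add: LC_def)
  next
    case False2: False
    have "\<not> (i - 1 \<le> N)" using False False2 by linarith
    then show ?thesis using False by (simp add: LC_def)
  qed
next
  case True
  define a where "a = N - i"
  define j where "j = 2*i - N - 1"
  have N: "N = 2*a+j+1" and i: "i = a+j+1" using assms True unfolding a_def j_def by linarith+
  show ?thesis
  proof (cases j)
    case 0
    have L1: "LC d (Suc N) i = fact (2*a+2) * d^(a+1) / (2^(a+1) * fact (a+1))"
      using N i 0 by (simp add: LC_def)
    have L2: "LC d N i = fact (2*a+1) * d^a / (2^a * fact a)"
      using N i 0 by (simp add: LC_def)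
    have L3: "LC d N (i-1) = 0"
      using N i 0 by (simp add: LC_def)
    have c: "2*real i - real N = 1" using N i 0 by simp
    have f1: "(fact (2*a+2) :: real) = (2 * real (a+1)) * fact (2*a+1)"
      using fact_Suc[of "2*a+1"] by simp
    have f2: "(fact (a+1) :: real) = real (a+1) * fact a"
      using fact_Suc[of a] by simp
    have p: "(2::real)^(a+1) = 2 * 2^a" "d^(a+1) = d * d^a" by simp_all
    have pos: "(fact a :: real) > 0" "(fact (2*a+1) :: real) > 0" "real a + 1 > 0" by simp_all
    show ?thesis unfolding L1 L2 L3 c f1 f2 p
      by (rule alg0) simp_all
  next
    case (Suc b)
    have h1: "Suc N \<le> 2*i" "i \<le> Suc N" "Suc N - i = a+1" "2*i - Suc N = b+1"
      "N \<le> 2*i" "i \<le> N" "N - i = a" "2*i - N = b+2"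
      "N \<le> 2*(i-1)" "i - 1 \<le> N" "N - (i-1) = a+1" "2*(i-1) - N = b"
      using N i Suc by simp_all
    have L1: "LC d (Suc N) i = fact (Suc N) * d^(a+1) / (fact (b+1) * 2^(a+1) * fact (a+1))"
      unfolding LC_def using h1 by (simp del: fact_Suc)
    have L2: "LC d N i = fact N * d^a / (fact (b+2) * 2^a * fact a)"
      unfolding LC_def using h1 by (simp del: fact_Suc)
    have L3: "LC d N (i-1) = fact N * d^(a+1) / (fact b * 2^(a+1) * fact (a+1))"
      unfolding LC_def using h1 by (simp del: fact_Suc)
    have c: "2*real i - real N = real b + 2" using N i Suc by simp
    have f1a: "(fact (Suc N) :: real) = real (Suc N) * fact N" by (rule fact_Suc)
    have f1b: "real (Suc N) = real (a+1) * 2 + (real b + 1)" using N Suc by simp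
    have f1: "(fact (Suc N) :: real) = (real (a+1) * 2 + (real b + 1)) * fact N"
      unfolding f1a f1b ..
    have f2: "(fact (a+1) :: real) = real (a+1) * fact a"
      using fact_Suc[of a] by simp
    have f3: "(fact (b+1) :: real) = (real b + 1) * fact b"
      using fact_Suc[of b] by simp
    have f4: "(fact (b+2) :: real) = (real b + 2) * ((real b + 1) * fact b)"
      using fact_Suc[of "b+1"] fact_Suc[of b] by (simp add: algebra_simps)
    have p: "(2::real)^(a+1) = 2 * 2^a" "d^(a+1) = d * d^a" by simp_all
    show ?thesis unfolding L1 L2 L3 c f1 f2 f3 f4 p
      by (rule alg1) simp_all
  qed
qed

definition F :: "nat \<Rightarrow> nat \<Rightarrow> nat \<Rightarrow> nat \<Rightarrow> real \<Rightarrow> real" where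
  "F r k N m q = (\<Sum>j=0..N. (-1)^j * q^(r*j^2 + m*j) * qbinom N j (q^k))"

lemma qpoch_Suc: "qpoch x q (Suc n) = qpoch x q n * (1 - q^n * x)"
  by (simp add: qpoch_def)

lemma qpoch_nz: assumes "0 < p" "p \<noteq> 1" shows "qpoch p p n \<noteq> 0"
proof -
  have "1 - p^j * p \<noteq> 0" for j
  proof
    assume "1 - p^j * p = 0"
    then have "p ^ Suc j = 1" by (simp add: algebra_simps)
    then have "norm p = 1" using power_eq_1_iff by blast
    then show False using assms by simp
  qed
  then show ?thesis by (simp add: qpoch_def)
qed

lemma qbinom_0: assumes "0 < p" "p \<noteq> 1" shows "qbinom N 0 p = 1"
  using qpoch_nz[OF assms, of N] by (simp add: qbinom_def qpoch_def)

lemma qbinom_N: assumes "0 < p" "p \<noteq> 1" shows "qbinom N N p = 1"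
  using qpoch_nz[OF assms, of N] by (simp add: qbinom_def qpoch_def)

lemma alg2: assumes "(A::real) \<noteq> 0" "B \<noteq> 0" "C \<noteq> 0" "1 - x \<noteq> 0" "1 - y \<noteq> 0" shows
  "A * (1 - x * y) / (B * (1 - x) * (C * (1 - y))) = A / (B * (C * (1 - y))) + x * (A / (B * (1 - x) * C))"
proof -
  have "A / (B * (C * (1 - y))) = A * (1 - x) / (B * (1 - x) * (C * (1 - y)))"
    using assms by simp
  moreover have "x * (A / (B * (1 - x) * C)) = x * A * (1 - y) / (B * (1 - x) * (C * (1 - y)))"
    using assms by simp
  ultimately have "A / (B * (C * (1 - y))) + x * (A / (B * (1 - x) * C))
     = (A * (1 - x) + x * A * (1 - y)) / (B * (1 - x) * (C * (1 - y)))"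
    by (simp add: add_divide_distrib)
  also have "A * (1 - x) + x * A * (1 - y) = A * (1 - x * y)" by (simp add: algebra_simps)
  finally show ?thesis by simp
qed

lemma qbinom_pascal:
  assumes "0 < p" "p \<noteq> 1" "i < N"
  shows "qbinom (Suc N) (Suc i) p = qbinom N i p + p^(Suc i) * qbinom N (Suc i) p"
proof -
  have e1: "Suc N - Suc i = N - i" by simp
  have e2: "N - i = Suc (N - Suc i)" using assms by simp
  have "N - Suc i + Suc i = N" using assms by simp
  then have pw: "p^(N - Suc i) * p^(Suc i) = p^N" by (metis power_add)
  define A where "A = qpoch p p N"
  define B where "B = qpoch p p i"
  define C where "C = qpoch p p (N - Suc i)"
  have nz: "A \<noteq> 0" "B \<noteq> 0" "C \<noteq> 0" using qpoch_nz[OF assms(1,2)] by (auto simp: A_def B_def C_def)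
  have n1: "1 - p^i * p \<noteq> 0" "1 - p^(N - Suc i) * p \<noteq> 0" "1 - p^N * p \<noteq> 0"
    using qpoch_nz[OF assms(1,2), of "Suc i"] qpoch_nz[OF assms(1,2), of "Suc (N - Suc i)"]
      qpoch_nz[OF assms(1,2), of "Suc N"] by (auto simp: qpoch_Suc)
  have L: "qbinom (Suc N) (Suc i) p = A * (1 - p^N*p) / (B * (1 - p^i*p) * (C * (1 - p^(N - Suc i) * p)))"
    unfolding qbinom_def e1 unfolding e2 by (simp add: qpoch_Suc A_def B_def C_def)
  have R1: "qbinom N i p = A / (B * (C * (1 - p^(N - Suc i) * p)))"
    unfolding qbinom_def e2 by (simp add: qpoch_Suc A_def B_def C_def)
  have R2: "qbinom N (Suc i) p = A / (B * (1 - p^i*p) * C)"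
    unfolding qbinom_def by (simp add: qpoch_Suc A_def B_def C_def)
  have pN: "p^N * p = (p^i*p) * (p^(N - Suc i) * p)" using pw by (simp add: algebra_simps)
  have pS: "p^(Suc i) = p^i * p" by simp
  show ?thesis unfolding L R1 R2 pN pS
    by (rule alg2) (use nz n1 pN in auto)
qed


lemma sh_bnd: "bnd p d \<Longrightarrow> bnd (pcompose p [:\<alpha>,1:]) d"
  using shift_lemma[of p \<alpha>] by blast
lemma sh_top: "bnd p d \<Longrightarrow> int e = d \<Longrightarrow> coeff (pcompose p [:\<alpha>,1:]) e = coeff p e"
  using shift_lemma[of p \<alpha>] by blast
lemma sh_next: "bnd p d \<Longrightarrow> int e = d - 1 \<Longrightarrow>
   coeff (pcompose p [:\<alpha>,1:]) e = coeff p e + of_int d * \<alpha> * coeff p (Suc e)"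
  using shift_lemma[of p \<alpha>] by blast

lemma F_rec:
  assumes "0 < q" "q \<noteq> 1" "1 \<le> k"
  shows "F r k (Suc N) m q = F r k N (m+k) q - q^(r+m) * F r k N (m+2*r) q"
proof -
  define p where "p = q^k"
  have p0: "0 < p" using assms by (simp add: p_def)
  have p1: "p \<noteq> 1"
  proof
    assume "p = 1"
    then have "q^k = 1" by (simp add: p_def)
    then have "norm q = 1" using power_eq_1_iff assms(3) by fastforce
    then show False using assms by simp
  qed
  define t where "t j = (-1)^j * q^(r*j^2 + m*j)" for j
  define U where "U j = (if j \<le> N then p^j * qbinom N j p else 0)" for j
  define V where "V j = (if 1 \<le> j then qbinom N (j-1) p else 0)" for j
  have qb: "qbinom (Suc N) j p = U j + V j" if jle: "j \<le> Suc N" for j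
  proof (cases "j = 0")
    case True then show ?thesis using qbinom_0[OF p0 p1] by (simp add: U_def V_def)
  next
    case False
    show ?thesis
    proof (cases "j = Suc N")
      case True then show ?thesis using qbinom_N[OF p0 p1] by (simp add: U_def V_def)
    next
      case False2: False
      then obtain i where i: "j = Suc i" "i < N" using False False2 jle by (cases j) auto
      show ?thesis using qbinom_pascal[OF p0 p1 i(2)] i by (simp add: U_def V_def)
    qed
  qed
  have "F r k (Suc N) m q = (\<Sum>j=0..Suc N. t j * qbinom (Suc N) j p)"
    by (simp add: F_def t_def p_def)
  also have "\<dots> = (\<Sum>j=0..Suc N. t j * U j + t j * V j)"
    by (rule sum.cong) (simp_all add: qb distrib_left)
  also have "\<dots> = (\<Sum>j=0..Suc N. t j * U j) + (\<Sum>j=0..Suc N. t j * V j)"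
    by (rule sum.distrib)
  also have "(\<Sum>j=0..Suc N. t j * U j) = F r k N (m+k) q"
  proof -
    have "(\<Sum>j=0..Suc N. t j * U j) = (\<Sum>j=0..N. t j * U j)"
      by (simp add: U_def)
    also have "\<dots> = F r k N (m+k) q"
      unfolding F_def
    proof (rule sum.cong)
      fix j assume "j \<in> {0..N}"
      then have "U j = p^j * qbinom N j p" by (simp add: U_def)
      moreover have "q^(r*j^2 + m*j) * p^j = q^(r*j^2 + (m+k)*j)"
        by (simp add: p_def power_mult[symmetric] power_add[symmetric] algebra_simps)
      ultimately show "t j * U j = (-1)^j * q^(r*j^2 + (m+k)*j) * qbinom N j (q^k)"
        unfolding t_def by (simp add: p_def mult.assoc[symmetric])
    qed simp
    finally show ?thesis .
  qed
  also have "(\<Sum>j=0..Suc N. t j * V j) = - (q^(r+m) * F r k N (m+2*r) q)"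
  proof -
    have "(\<Sum>j=0..Suc N. t j * V j) = t 0 * V 0 + (\<Sum>i=0..N. t (Suc i) * V (Suc i))"
        by (simp only: sum.atLeast0_atMost_Suc_shift comp_def)
    also have "\<dots> = (\<Sum>i=0..N. - (q^(r+m) * ((-1)^i * q^(r*i^2 + (m+2*r)*i) * qbinom N i (q^k))))"
    proof -
      have "t (Suc i) * V (Suc i) = - (q^(r+m) * ((-1)^i * q^(r*i^2 + (m+2*r)*i) * qbinom N i (q^k)))" for i
      proof -
        have e: "r*(Suc i)^2 + m*(Suc i) = (r+m) + (r*i^2 + (m+2*r)*i)"
          by (simp add: power2_eq_square algebra_simps)
        have e': "q^(r*(Suc i)^2 + m*(Suc i)) = q^(r+m) * q^(r*i^2 + (m+2*r)*i)"
          by (simp only: e power_add)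
        show ?thesis unfolding t_def V_def p_def e' by simp
      qed
      then show ?thesis by (simp add: V_def)
    qed
    also have "\<dots> = - (q^(r+m) * F r k N (m+2*r) q)"
      unfolding F_def by (simp add: sum_negf sum_distrib_left)
    finally show ?thesis .
  qed
  finally show ?thesis by simp
qed

lemma F_H:
  assumes "0 < q" "q \<noteq> 1" "1 \<le> k"
  shows "F r k N m q = poly (H r k N m) (1-q)"
proof (induction N arbitrary: m)
  case 0
  then show ?case by (simp add: F_def qbinom_def qpoch_def)
next
  case (Suc N)
  have pw: "poly ([:1,-1:]^y) (1-q) = q^y" for y by (simp add: poly_power)
  show ?case unfolding F_rec[OF assms] Suc.IH by (simp add: pw)
qed


lemma poly_sh: "poly (pcompose p [:real a, 1:]) (real m) = poly p (real (m + a))"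
  by (simp add: poly_pcompose add.commute)

lemma main_coeff:
  fixes r k :: nat
  shows "\<exists>P. \<forall>i. (\<forall>m. coeff (H r k N m) i = poly (P i) (real m)) \<and> bnd (P i) (2*int i - int N) \<and>
     (\<forall>e. int e = 2*int i - int N \<longrightarrow> coeff (P i) e = LC (real k - 2*real r) N i)"
proof (induction N)
  case 0
  show ?case
  proof (rule exI[of _ "\<lambda>i. [:(if i = 0 then 1 else 0):]"], rule allI, intro conjI)
    fix i
    show "\<forall>m. coeff (H r k 0 m) i = poly [:(if i = 0 then 1 else 0):] (real m)"
      by (simp add: coeff_1)
    show "bnd [:(if i = 0 then 1 else 0):] (2*int i - int 0)"
      by (auto simp: bnd_def coeff_pCons split: nat.splits)
    show "\<forall>e. int e = 2*int i - int 0 \<longrightarrow> coeff [:(if i = 0 then 1 else 0):] e = LC (real k - 2*real r) 0 i"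
      by (auto simp: LC_def)
  qed
next
  case (Suc N)
  then obtain P where P: "\<forall>i. (\<forall>m. coeff (H r k N m) i = poly (P i) (real m)) \<and> bnd (P i) (2*int i - int N) \<and>
     (\<forall>e. int e = 2*int i - int N \<longrightarrow> coeff (P i) e = LC (real k - 2*real r) N i)" by blast
  define d where "d = real k - 2*real r"
  define T where "T i a = pcompose (Cp a) [:real r,1:] * pcompose (P (i-a)) [:real (2*r),1:]" for i a
  define Q where "Q i = pcompose (P i) [:real k,1:] - pcompose (P i) [:real (2*r),1:] - (\<Sum>a\<in>{..i}-{0}. T i a)" for i
  show ?case
  proof (rule exI[of _ Q], rule allI, intro conjI)
    fix i
    show "\<forall>m. coeff (H r k (Suc N) m) i = poly (Q i) (real m)"
    proof
      fix m
      have c: "coeff ([:1,-1:]^(r+m) * H r k N (m+2*r)) i =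
          (\<Sum>a\<le>i. poly (Cp a) (real (m+r)) * poly (P (i-a)) (real (m+2*r)))"
      proof -
        have pc: "poly (Cp a) (real m + real r) = (-1)^a * real (m+r choose a)" for a
          using poly_Cp[of a "m+r"] by simp
        show ?thesis unfolding coeff_mult using P by (simp add: coeff_lin_pow pc add.commute)
      qed
      have "(\<Sum>a\<le>i. poly (Cp a) (real (m+r)) * poly (P (i-a)) (real (m+2*r))) =
          poly (Cp 0) (real (m+r)) * poly (P (i-0)) (real (m+2*r)) +
          (\<Sum>a\<in>{..i}-{0}. poly (Cp a) (real (m+r)) * poly (P (i-a)) (real (m+2*r)))"
        by (rule sum.remove) auto
      also have "\<dots> = poly (P i) (real (m+2*r)) + (\<Sum>a\<in>{..i}-{0}. poly (T i a) (real m))"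
        using poly_Cp[of 0 "m+r"] by (simp add: T_def poly_pcompose add.commute)
      finally have c2: "(\<Sum>a\<le>i. poly (Cp a) (real (m+r)) * poly (P (i-a)) (real (m+2*r))) =
          poly (P i) (real (m+2*r)) + (\<Sum>a\<in>{..i}-{0}. poly (T i a) (real m))" .
      have "coeff (H r k (Suc N) m) i = poly (P i) (real (m+k)) - (poly (P i) (real (m+2*r)) + (\<Sum>a\<in>{..i}-{0}. poly (T i a) (real m)))"
        using P c c2 by simp
      also have "\<dots> = poly (Q i) (real m)"
        unfolding Q_def by (simp add: poly_pcompose poly_sum add.commute)
      finally show "coeff (H r k (Suc N) m) i = poly (Q i) (real m)" .
    qed
    define D where "D = 2*int i - int N"
    have bPi: "bnd (P i) D" using P by (simp add: D_def)
    have Tb: "bnd (T i a) (D - int a)" if a: "a \<in> {..i}-{0}" for a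
    proof -
      have b1: "bnd (pcompose (Cp a) [:real r,1:]) (int a)" by (rule sh_bnd[OF Cp_bnd])
      have b2: "bnd (pcompose (P (i-a)) [:real (2*r),1:]) (2*int (i-a) - int N)"
        by (rule sh_bnd) (use P in blast)
      have "bnd (T i a) (int a + (2*int (i-a) - int N))" unfolding T_def by (rule bnd_mult[OF b1 b2])
      moreover have "int a + (2*int (i-a) - int N) = D - int a" using a by (auto simp: D_def)
      ultimately show ?thesis by simp
    qed
    have Tz: "coeff (T i a) e = 0" if a: "a \<in> {..i}-{0}" and e: "int e \<ge> D \<or> (a \<ge> 2 \<and> int e \<ge> D - 1)" for a e
    proof -
      have "int e > D - int a" using a e by auto
      then show ?thesis using Tb[OF a] by (simp add: bnd_def)
    qed
    have Difz: "coeff (pcompose (P i) [:real k,1:] - pcompose (P i) [:real (2*r),1:]) e = 0" if e: "int e \<ge> D" for e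
    proof (cases "int e = D")
      case True
      then show ?thesis using sh_top[OF bPi True] by simp
    next
      case False
      then have "int e > D" using e by simp
      then show ?thesis using sh_bnd[OF bPi, of "real k"] sh_bnd[OF bPi, of "real (2*r)"] by (simp add: bnd_def)
    qed
    have cQ: "coeff (Q i) e = coeff (pcompose (P i) [:real k,1:] - pcompose (P i) [:real (2*r),1:]) e
        - (\<Sum>a\<in>{..i}-{0}. coeff (T i a) e)" for e
      unfolding Q_def by (simp add: coeff_sum)
    show "bnd (Q i) (2*int i - int (Suc N))"
      unfolding bnd_def
    proof (intro allI impI)
      fix e assume e: "2*int i - int (Suc N) < int e"
      then have e': "int e \<ge> D" by (simp add: D_def)
      have "(\<Sum>a\<in>{..i}-{0}. coeff (T i a) e) = 0"
        by (rule sum.neutral) (use Tz e' in auto)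
      then show "coeff (Q i) e = 0" unfolding cQ using Difz[OF e'] by simp
    qed
    show "\<forall>e. int e = 2*int i - int (Suc N) \<longrightarrow> coeff (Q i) e = LC (real k - 2*real r) (Suc N) i"
    proof (intro allI impI)
      fix e assume e: "int e = 2*int i - int (Suc N)"
      then have eD: "int e = D - 1" by (simp add: D_def)
      have sN: "Suc N \<le> 2*i" using e by linarith
      then have i1: "1 \<le> i" by simp
      have LCi: "coeff (P i) (Suc e) = LC d N i" using P eD by (simp add: D_def d_def)
      have dif: "coeff (pcompose (P i) [:real k,1:] - pcompose (P i) [:real (2*r),1:]) e = of_int D * d * LC d N i"
        using sh_next[OF bPi eD, of "real k"] sh_next[OF bPi eD, of "real (2*r)"] LCi
        by (simp add: d_def algebra_simps)
      have "(\<Sum>a\<in>{..i}-{0}. coeff (T i a) e) = coeff (T i 1) e + (\<Sum>a\<in>{..i}-{0}-{1}. coeff (T i a) e)"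
        by (rule sum.remove) (use i1 in auto)
      also have "(\<Sum>a\<in>{..i}-{0}-{1}. coeff (T i a) e) = 0"
        by (rule sum.neutral) (use Tz eD in auto)
      also have "coeff (T i 1) e = - LC d N (i-1)"
      proof (cases "N \<le> 2*(i-1)")
        case True
        have b1: "bnd (pcompose (Cp 1) [:real r,1:]) (int 1)" by (rule sh_bnd[OF Cp_bnd])
        have bP: "bnd (P (i-1)) (2*int (i-1) - int N)" using P by blast
        have b2: "bnd (pcompose (P (i-1)) [:real (2*r),1:]) (2*int (i-1) - int N)"
          by (rule sh_bnd[OF bP])
        have e1: "int (e - 1) = 2*int (i-1) - int N" using eD True i1 by (simp add: D_def)
        have ee: "e = 1 + (e - 1)" using eD True i1 by (simp add: D_def)
        have "coeff (T i 1) e = coeff (pcompose (Cp 1) [:real r,1:]) 1 * coeff (pcompose (P (i-1)) [:real (2*r),1:]) (e-1)"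
          unfolding T_def by (subst ee, rule bnd_mult_coeff[OF b1 b2]) (rule refl, rule e1)
        also have "\<dots> = coeff (Cp 1) 1 * coeff (P (i-1)) (e-1)"
          using sh_top[OF Cp_bnd[of 1], of 1 "real r"] sh_top[OF bP e1, of "real (2*r)"] by simp
        also have "\<dots> = - LC d N (i-1)"
          using Cp_coeff[of 1] P e1 by (simp add: d_def)
        finally show ?thesis .
      next
        case False
        have "P (i-1) = 0" using P False by (intro bnd_neg[of _ "2*int (i-1) - int N"]) auto
        then show ?thesis using False by (simp add: T_def LC_def)
      qed
      finally have sm: "(\<Sum>a\<in>{..i}-{0}. coeff (T i a) e) = - LC d N (i-1)" by simp
      have "coeff (Q i) e = of_int D * d * LC d N i + LC d N (i-1)"
        unfolding cQ dif sm by simp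
      also have "\<dots> = LC d (Suc N) i"
        using LC_rec[OF sN, of d] by (simp add: D_def)
      finally show "coeff (Q i) e = LC (real k - 2*real r) (Suc N) i" by (simp add: d_def)
    qed
  qed
qed


lemma prod_odd: "(\<Prod>j<n. real (2*j+1)) * 2^n * fact n = fact (2*n)"
proof (induction n)
  case 0
  then show ?case by simp
next
  case (Suc n)
  have f: "(fact (2 * Suc n) :: real) = (2*real n + 2) * ((2*real n + 1) * fact (2*n))"
  proof -
    have "2 * Suc n = Suc (Suc (2*n))" by simp
    then have "(fact (2 * Suc n) :: real) = real (Suc (Suc (2*n))) * (real (Suc (2*n)) * fact (2*n))"
      by (simp only: fact_Suc)
    then show ?thesis by (simp add: algebra_simps)
  qed
  have "(\<Prod>j<Suc n. real (2*j+1)) * 2^Suc n * fact (Suc n)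
      = (2*real n + 2) * (2*real n + 1) * ((\<Prod>j<n. real (2*j+1)) * 2^n * fact n)"
    by (simp add: prod.lessThan_Suc algebra_simps)
  also have "\<dots> = fact (2 * Suc n)" unfolding Suc.IH f by simp
  finally show ?case .
qed

lemma bnd0_poly: "bnd p 0 \<Longrightarrow> poly p x = coeff p 0"
proof -
  assume b: "bnd p 0"
  have "p = [:coeff p 0:]"
  proof (rule poly_eqI)
    fix e show "coeff p e = coeff [:coeff p 0:] e"
      using b by (cases e) (auto simp: bnd_def)
  qed
  then show ?thesis by (metis poly_pCons poly_0 mult_zero_right add_0_right)
qed

lemma qpoch_split: "qpoch q (q^2) n = (1-q)^n * (\<Prod>j<n. \<Sum>t<2*j+1. q^t)"
proof -
  have "qpoch q (q^2) n = (\<Prod>j<n. (1-q) * (\<Sum>t<2*j+1. q^t))"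
    unfolding qpoch_def
  proof (rule prod.cong)
    fix j
    have "(q^2)^j * q = q^(2*j+1)" by (simp add: power_mult[symmetric])
    then show "1 - (q^2)^j * q = (1-q) * (\<Sum>t<2*j+1. q^t)" by (simp only: one_diff_power_eq)
  qed simp
  also have "\<dots> = (1-q)^n * (\<Prod>j<n. \<Sum>t<2*j+1. q^t)"
    by (simp add: prod.distrib)
  finally show ?thesis .
qed

theorem theorem2p3:
  fixes r m k n :: nat
  assumes "k \<ge> 1"
  shows "((\<lambda>q::real. (\<Sum>j=0..2*n. (-1) ^ j * q ^ (r * j^2 + m * j) * qbinom (2*n) j (q ^ k))
                      / qpoch q (q^2) n)
          \<longlongrightarrow> (real k - 2 * real r) ^ n) (at 1)"
proof -
  define d where "d = real k - 2 * real r"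
  obtain P where P: "\<forall>i. (\<forall>m. coeff (H r k (2*n) m) i = poly (P i) (real m)) \<and> bnd (P i) (2*int i - int (2*n)) \<and>
     (\<forall>e. int e = 2*int i - int (2*n) \<longrightarrow> coeff (P i) e = LC (real k - 2*real r) (2*n) i)"
    using main_coeff[of r k "2*n"] by blast
  define Hp where "Hp = H r k (2*n) m"
  have low: "coeff Hp i = 0" if "i < n" for i
  proof -
    have "P i = 0" using P that by (intro bnd_neg[of _ "2*int i - int (2*n)"]) auto
    then show ?thesis using P by (simp add: Hp_def)
  qed
  have cn: "coeff Hp n = LC d (2*n) n"
  proof -
    have "bnd (P n) (2*int n - int (2*n))" using P by blast
    then have b: "bnd (P n) 0" by simp
    have "coeff Hp n = poly (P n) (real m)" using P by (simp add: Hp_def)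
    also have "\<dots> = coeff (P n) 0" by (rule bnd0_poly[OF b])
    also have "\<dots> = LC d (2*n) n" using P by (simp add: d_def)
    finally show ?thesis .
  qed
  define R where "R = poly_shift n Hp"
  have Hs: "Hp = monom 1 n * R"
    by (rule poly_eqI) (auto simp: R_def coeff_monom_mult coeff_poly_shift low)
  have R0: "poly R 0 = LC d (2*n) n"
    by (simp add: poly_0_coeff_0 R_def coeff_poly_shift cn)
  define B where "B q = (\<Prod>j<n. \<Sum>t<2*j+1. (q::real)^t)" for q
  have B1: "B 1 = (\<Prod>j<n. real (2*j+1))" by (simp add: B_def)
  have B1nz: "B 1 \<noteq> 0" unfolding B1 by (simp add: prod_zero_iff)
  have ev: "\<forall>\<^sub>F q in at (1::real). q > 0 \<and> q \<noteq> 1"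
    unfolding eventually_at by (rule exI[of _ 1]) (auto simp: dist_real_def)
  have eq: "\<forall>\<^sub>F q in at (1::real). poly R (1 - q) / B q =
      (\<Sum>j=0..2*n. (-1) ^ j * q ^ (r * j^2 + m * j) * qbinom (2*n) j (q ^ k)) / qpoch q (q^2) n"
    using ev
  proof eventually_elim
    case (elim q)
    then have q: "0 < q" "q \<noteq> 1" by auto
    have "(\<Sum>j=0..2*n. (-1) ^ j * q ^ (r * j^2 + m * j) * qbinom (2*n) j (q ^ k)) = F r k (2*n) m q"
      by (simp add: F_def)
    also have "\<dots> = poly Hp (1-q)" unfolding Hp_def by (rule F_H[OF q assms])
    also have "\<dots> = (1-q)^n * poly R (1-q)" unfolding Hs by (simp add: poly_monom)
    finally have num: "(\<Sum>j=0..2*n. (-1) ^ j * q ^ (r * j^2 + m * j) * qbinom (2*n) j (q ^ k)) = (1-q)^n * poly R (1-q)" .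
    have den: "qpoch q (q^2) n = (1-q)^n * B q" unfolding B_def by (rule qpoch_split)
    have nz: "(1-q)^n \<noteq> 0" using q by simp
    show ?case unfolding num den using nz q by simp
  qed
  have cont: "continuous (at 1) (\<lambda>q. poly R (1 - q) / B q)"
    unfolding B_def using B1nz unfolding B_def by (intro continuous_intros) auto
  then have lim: "((\<lambda>q. poly R (1 - q) / B q) \<longlongrightarrow> poly R 0 / B 1) (at 1)"
    by (simp add: continuous_at)
  have val: "poly R 0 / B 1 = d ^ n"
  proof -
    have "LC d (2*n) n = fact (2*n) * d^n / (2^n * fact n)" by (simp add: LC_def)
    moreover have "fact (2*n) = (\<Prod>j<n. real (2*j+1)) * 2^n * fact n" using prod_odd[of n] by simp
    ultimately show ?thesis unfolding R0 B1 using B1nz[unfolded B1] by (simp add: field_simps)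
  qed
  show ?thesis using tendsto_cong[OF eq] lim unfolding val d_def by simp
qed

end
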